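(* Let $A$ be a non-reduced Abelian group. Then $\mathrm{End}\,A$ is centrally essential if and only if $\mathrm{End}\,A$ is commutative.
   Context: All rings are associative with non-zero identity. A ring $R$ is centrally essential if for every non-zero $a\in R$ there exist non-zero elements $x,y$ of the center of $R$ with $ax=y$. An Abelian group is non-reduced if it contains a non-zero divisible subgroup. *)

theory Defs
  imports Main
begin

text \<open>The Abelian group A is the whole carrier of a type of class ab_group_add.\<close>

definition nsmul :: "nat \<Rightarrow> 'a::ab_group_add \<Rightarrow> 'a" where
  "nsmul n x = (\<Sum>_<n. x)"

definition is_subgroup :: "'a::ab_group_add set \<Rightarrow> bool" where
  "is_subgroup D \<longleftrightarrow> 0 \<in> D \<and> (\<forall>x\<in>D. \<forall>y\<in>D. x + y \<in> D) \<and> (\<forall>x\<in>D. - x \<in> D)"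

definition divisible_subgroup :: "'a::ab_group_add set \<Rightarrow> bool" where
  "divisible_subgroup D \<longleftrightarrow> is_subgroup D \<and>
     (\<forall>d\<in>D. \<forall>n::nat. n > 0 \<longrightarrow> (\<exists>e\<in>D. nsmul n e = d))"

definition non_reduced :: "'a::ab_group_add itself \<Rightarrow> bool" where
  "non_reduced _ \<longleftrightarrow> (\<exists>D::'a set. divisible_subgroup D \<and> D \<noteq> {0})"

text \<open>The endomorphism ring End A: additive maps, with pointwise addition,
  zero map as zero and composition as multiplication.\<close>

definition End :: "('a::ab_group_add \<Rightarrow> 'a) set" where
  "End = {f. \<forall>x y. f (x + y) = f x + f y}"

definition End_center :: "('a::ab_group_add \<Rightarrow> 'a) set" where
  "End_center = {z \<in> End. \<forall>f\<in>End. z \<circ> f = f \<circ> z}"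

definition End_centrally_essential :: "'a::ab_group_add itself \<Rightarrow> bool" where
  "End_centrally_essential _ \<longleftrightarrow>
     (\<forall>a\<in>(End :: ('a \<Rightarrow> 'a) set). a \<noteq> (\<lambda>_. 0) \<longrightarrow>
        (\<exists>x\<in>End_center. \<exists>y\<in>End_center. x \<noteq> (\<lambda>_. 0) \<and> y \<noteq> (\<lambda>_. 0) \<and> a \<circ> x = y))"

definition End_commutative :: "'a::ab_group_add itself \<Rightarrow> bool" where
  "End_commutative _ \<longleftrightarrow> (\<forall>f\<in>(End :: ('a \<Rightarrow> 'a) set). \<forall>g\<in>End. f \<circ> g = g \<circ> f)"

end

theory Submission
  imports Defs "HOL-Computational_Algebra.Primes"
begin

lemma nsmul_0[simp]: "nsmul 0 x = 0" by (simp add: nsmul_def)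
lemma nsmul_Suc: "nsmul (Suc n) x = x + nsmul n x" by (simp add: nsmul_def add.commute)
lemma nsmul_add: "nsmul (m + n) x = nsmul m x + nsmul n x"
  by (induction m) (simp_all add: nsmul_Suc add.assoc)
lemma nsmul_zero[simp]: "nsmul n 0 = 0" by (simp add: nsmul_def)
lemma nsmul_plus: "nsmul n (x + y) = nsmul n x + nsmul n y"
  by (induction n) (simp_all add: nsmul_Suc algebra_simps)
lemma nsmul_minus: "nsmul n (- x) = - nsmul n x"
  by (induction n) (simp_all add: nsmul_Suc algebra_simps)
lemma nsmul_diff: "nsmul n (x - y) = nsmul n x - nsmul n y"
  using nsmul_plus[of n x "-y"] by (simp add: nsmul_minus)
lemma nsmul_mult: "nsmul (m * n) x = nsmul m (nsmul n x)"
  by (induction m) (simp_all add: nsmul_Suc nsmul_add)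
lemma nsmul_1[simp]: "nsmul 1 x = x" by (simp add: nsmul_def)

definition zmul :: "int \<Rightarrow> 'a::ab_group_add \<Rightarrow> 'a" where
  "zmul j x = nsmul (nat j) x - nsmul (nat (- j)) x"

lemma zmul_diff_nat: "zmul (int n - int m) x = nsmul n x - nsmul m x"
proof -
  have "nat (int n - int m) + m = nat (- (int n - int m)) + n" by linarith
  hence "nsmul (nat (int n - int m) + m) x = nsmul (nat (- (int n - int m)) + n) x" by simp
  hence "nsmul (nat (int n - int m)) x + nsmul m x = nsmul (nat (- (int n - int m))) x + nsmul n x"
    by (simp add: nsmul_add)
  thus ?thesis unfolding zmul_def by (simp add: algebra_simps)
qed

lemma int_split: "(j::int) = int (nat j) - int (nat (-j))" by linarith

lemma zmul_add: "zmul (a + b) x = zmul a x + zmul b x"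
proof -
  have "a + b = int (nat a + nat b) - int (nat (-a) + nat (-b))" by linarith
  hence "zmul (a+b) x = nsmul (nat a + nat b) x - nsmul (nat (-a) + nat (-b)) x"
    by (metis zmul_diff_nat)
  thus ?thesis by (simp add: zmul_def nsmul_add algebra_simps)
qed

lemma zmul_nat: "zmul (int n) x = nsmul n x" by (simp add: zmul_def)
lemma zmul_0[simp]: "zmul 0 x = 0" by (simp add: zmul_def)
lemma zmul_1[simp]: "zmul 1 x = x" by (simp add: zmul_def nsmul_def)
lemma zmul_zero[simp]: "zmul j 0 = 0" by (simp add: zmul_def)
lemma zmul_uminus: "zmul (- a) x = - zmul a x" by (simp add: zmul_def)
lemma zmul_diff: "zmul (a - b) x = zmul a x - zmul b x"
  using zmul_add[of a "-b" x] by (simp add: zmul_uminus)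
lemma zmul_plus: "zmul j (x + y) = zmul j x + zmul j y"
  by (simp add: zmul_def nsmul_plus algebra_simps)
lemma zmul_neg: "zmul j (- x) = - zmul j x"
  by (simp add: zmul_def nsmul_minus algebra_simps)
lemma zmul_minus: "zmul j (x - y) = zmul j x - zmul j y"
  using zmul_plus[of j x "-y"] by (simp add: zmul_neg)
lemma zmul_mult: "zmul (a * b) x = zmul a (zmul b x)"
proof -
  have "a * b = int (nat a * nat b + nat (-a) * nat (-b)) - int (nat a * nat (-b) + nat (-a) * nat b)"
    by (cases "a \<ge> 0"; cases "b \<ge> 0") (simp_all add: algebra_simps)
  hence "zmul (a*b) x = nsmul (nat a * nat b + nat (-a) * nat (-b)) x - nsmul (nat a * nat (-b) + nat (-a) * nat b) x"
    by (metis zmul_diff_nat)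
  moreover have "nsmul (nat b) (nsmul (nat (-a)) x) = nsmul (nat (-a)) (nsmul (nat b) x)"
    by (metis nsmul_mult mult.commute)
  ultimately show ?thesis by (simp add: zmul_def nsmul_add nsmul_mult nsmul_diff algebra_simps)
qed

lemma End_add: "f \<in> End \<Longrightarrow> f (x + y) = f x + f y" by (simp add: End_def)
lemma End_0: "f \<in> End \<Longrightarrow> f 0 = 0" using End_add[of f 0 0] by simp
lemma End_neg: "f \<in> End \<Longrightarrow> f (- x) = - f x"
  using End_add[of f x "-x"] End_0[of f] by (simp add: eq_neg_iff_add_eq_0 add.commute)
lemma End_diff: "f \<in> End \<Longrightarrow> f (x - y) = f x - f y"
  using End_add[of f x "-y"] End_neg[of f y] by simp
lemma End_nsmul: "f \<in> End \<Longrightarrow> f (nsmul n x) = nsmul n (f x)"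
  by (induction n) (simp_all add: nsmul_Suc End_add End_0)
lemma End_zmul: "f \<in> End \<Longrightarrow> f (zmul j x) = zmul j (f x)"
  by (simp add: zmul_def End_diff End_nsmul)
lemma End_comp: "f \<in> End \<Longrightarrow> g \<in> End \<Longrightarrow> (\<lambda>x. f (g x)) \<in> End"
  by (simp add: End_def)
lemma End_compo: "f \<in> End \<Longrightarrow> g \<in> End \<Longrightarrow> f \<circ> g \<in> End"
  by (simp add: End_def)
lemma End_id: "(\<lambda>x. x) \<in> End" by (simp add: End_def)
lemma End_minus: "f \<in> End \<Longrightarrow> g \<in> End \<Longrightarrow> (\<lambda>x. f x - g x) \<in> End"
  by (simp add: End_def algebra_simps)

lemma idem_aux:
  assumes CE: "End_centrally_essential TYPE('a::ab_group_add)"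
    and e: "e \<in> End" "\<And>x. e (e x) = (e x :: 'a)" and f: "f \<in> End"
  shows "e (f (x - e x)) = 0"
proof -
  define a where "a = (\<lambda>z. e (f (z - e z)))"
  have aE: "a \<in> End" unfolding a_def End_def using e f by (simp add: End_add End_diff)
  have "a = (\<lambda>_. 0)"
  proof (rule ccontr)
    assume "a \<noteq> (\<lambda>_. 0)"
    then obtain xc yc where xc: "xc \<in> End_center" and yc: "yc \<in> End_center"
      and ny: "yc \<noteq> (\<lambda>_. 0)" and axy: "a \<circ> xc = yc"
      using CE aE unfolding End_centrally_essential_def by blast
    have xcE: "xc \<in> End" and xcc: "xc \<circ> e = e \<circ> xc" using xc e unfolding End_center_def by auto
    have ycc: "yc \<circ> e = e \<circ> yc" using yc e unfolding End_center_def by auto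
    have "yc z = 0" for z
    proof -
      have "yc (e z) = a (xc (e z))" using axy by (metis comp_apply)
      also have "\<dots> = a (e (xc z))" using xcc by (metis comp_apply)
      also have "\<dots> = 0" unfolding a_def using e f by (simp add: End_0)
      finally have 1: "yc (e z) = 0" .
      have "e (yc z) = e (a (xc z))" using axy by (metis comp_apply)
      also have "\<dots> = a (xc z)" unfolding a_def using e by simp
      also have "\<dots> = yc z" using axy by (metis comp_apply)
      finally have 2: "e (yc z) = yc z" .
      from ycc have "yc (e z) = e (yc z)" by (metis comp_apply)
      with 1 2 show ?thesis by simp
    qed
    with ny show False by auto
  qed
  thus ?thesis unfolding a_def by meson
qed

lemma idem_central:
  assumes CE: "End_centrally_essential TYPE('a::ab_group_add)"
    and e: "e \<in> End" "\<And>x. e (e x) = (e x :: 'a)" and f: "f \<in> End"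
  shows "e (f x) = f (e x)"
proof -
  define e' where "e' = (\<lambda>z. z - e z)"
  have e'E: "e' \<in> End" unfolding e'_def End_def using e by (simp add: End_add)
  have e'i: "e' (e' z) = e' z" for z unfolding e'_def using e by (simp add: End_diff)
  have 1: "e (f (x - e x)) = 0" using idem_aux[OF CE e f] .
  have 2: "e' (f (z - e' z)) = 0" for z using idem_aux[OF CE e'E e'i f] .
  have "e' (f (e x)) = 0" using 2[of x] unfolding e'_def by simp
  hence 3: "f (e x) = e (f (e x))" unfolding e'_def by simp
  have "e (f x) = e (f (e x))" using 1 f e by (simp add: End_diff)
  with 3 show ?thesis by simp
qed

lemma sg_0: "is_subgroup H \<Longrightarrow> 0 \<in> H" by (simp add: is_subgroup_def)
lemma sg_add: "is_subgroup H \<Longrightarrow> x \<in> H \<Longrightarrow> y \<in> H \<Longrightarrow> x + y \<in> H" by (simp add: is_subgroup_def)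
lemma sg_neg: "is_subgroup H \<Longrightarrow> x \<in> H \<Longrightarrow> - x \<in> H" by (simp add: is_subgroup_def)
lemma sg_diff: "is_subgroup H \<Longrightarrow> x \<in> H \<Longrightarrow> y \<in> H \<Longrightarrow> x - y \<in> H"
  using sg_add[of H x "-y"] sg_neg[of H y] by simp
lemma sg_nsmul: "is_subgroup H \<Longrightarrow> x \<in> H \<Longrightarrow> nsmul n x \<in> H"
  by (induction n) (simp_all add: nsmul_Suc sg_0 sg_add)
lemma sg_zmul: "is_subgroup H \<Longrightarrow> x \<in> H \<Longrightarrow> zmul j x \<in> H"
  unfolding zmul_def by (simp add: sg_diff sg_nsmul)

lemma phom_0: "is_subgroup H \<Longrightarrow> (\<forall>u\<in>H. \<forall>v\<in>H. \<phi> (u+v) = \<phi> u + \<phi> v) \<Longrightarrow> \<phi> 0 = (0::'b::ab_group_add)"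
  using sg_0[of H] by (metis add_cancel_right_right add_0)
lemma phom_neg: "is_subgroup H \<Longrightarrow> (\<forall>u\<in>H. \<forall>v\<in>H. \<phi> (u+v) = \<phi> u + \<phi> v) \<Longrightarrow> x \<in> H \<Longrightarrow> \<phi> (- x) = - (\<phi> x::'b::ab_group_add)"
  using phom_0[of H \<phi>] sg_neg[of H x]
  by (metis add.right_inverse add_eq_0_iff)
lemma phom_diff: "is_subgroup H \<Longrightarrow> (\<forall>u\<in>H. \<forall>v\<in>H. \<phi> (u+v) = \<phi> u + \<phi> v) \<Longrightarrow> x \<in> H \<Longrightarrow> y \<in> H \<Longrightarrow> \<phi> (x - y) = \<phi> x - (\<phi> y::'b::ab_group_add)"
  using phom_neg[of H \<phi> y] sg_neg[of H y] by (metis diff_conv_add_uminus)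
lemma phom_nsmul: "is_subgroup H \<Longrightarrow> (\<forall>u\<in>H. \<forall>v\<in>H. \<phi> (u+v) = \<phi> u + \<phi> v) \<Longrightarrow> x \<in> H \<Longrightarrow> \<phi> (nsmul n x) = nsmul n (\<phi> x::'b::ab_group_add)"
  by (induction n) (simp_all add: nsmul_Suc phom_0 sg_nsmul)
lemma phom_zmul: "is_subgroup H \<Longrightarrow> (\<forall>u\<in>H. \<forall>v\<in>H. \<phi> (u+v) = \<phi> u + \<phi> v) \<Longrightarrow> x \<in> H \<Longrightarrow> \<phi> (zmul j x) = zmul j (\<phi> x::'b::ab_group_add)"
  unfolding zmul_def by (simp add: phom_diff phom_nsmul sg_nsmul)

lemma ideal_gen:
  assumes H: "is_subgroup H"
  shows "\<exists>m0::int. m0 \<ge> 0 \<and> (\<forall>j. zmul j x \<in> H \<longleftrightarrow> m0 dvd j)"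
proof (cases "\<exists>n::nat. n > 0 \<and> zmul (int n) x \<in> H")
  case True
  define n0 where "n0 = (LEAST n::nat. n > 0 \<and> zmul (int n) x \<in> H)"
  have n0: "n0 > 0" "zmul (int n0) x \<in> H" using LeastI_ex[OF True] unfolding n0_def by auto
  have min: "\<And>n. n > 0 \<Longrightarrow> zmul (int n) x \<in> H \<Longrightarrow> n0 \<le> n" unfolding n0_def by (simp add: Least_le)
  have "zmul j x \<in> H \<longleftrightarrow> int n0 dvd j" for j
  proof
    assume jH: "zmul j x \<in> H"
    define q r where "q = j div int n0" and "r = j mod int n0"
    have jqr: "j = q * int n0 + r" unfolding q_def r_def by simp
    have r0: "0 \<le> r" "r < int n0" unfolding r_def using n0 by simp_all
    have "zmul r x = zmul j x - zmul q (zmul (int n0) x)"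
      using jqr by (simp add: zmul_add zmul_mult)
    hence rH: "zmul r x \<in> H" using jH n0 H by (simp add: sg_diff sg_zmul)
    have "r = 0"
    proof (rule ccontr)
      assume "r \<noteq> 0"
      hence "nat r > 0" using r0 by simp
      moreover have "zmul (int (nat r)) x \<in> H" using rH r0 by simp
      ultimately have "n0 \<le> nat r" using min by blast
      thus False using r0 by linarith
    qed
    thus "int n0 dvd j" using jqr by simp
  next
    assume "int n0 dvd j"
    then obtain t where "j = int n0 * t" by (auto elim: dvdE)
    hence "zmul j x = zmul t (zmul (int n0) x)" by (simp add: zmul_mult mult.commute)
    thus "zmul j x \<in> H" using n0 H by (simp add: sg_zmul)
  qed
  thus ?thesis by (intro exI[of _ "int n0"]) simp
next
  case False
  have "zmul j x \<in> H \<longleftrightarrow> j = 0" for j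
  proof
    assume jH: "zmul j x \<in> H"
    show "j = 0"
    proof (rule ccontr)
      assume j0: "j \<noteq> 0"
      have "zmul (int (nat \<bar>j\<bar>)) x \<in> H"
      proof (cases "j \<ge> 0")
        case True thus ?thesis using jH by simp
      next
        case False
        hence "int (nat \<bar>j\<bar>) = - j" by simp
        hence "zmul (int (nat \<bar>j\<bar>)) x = - zmul j x" by (metis zmul_uminus)
        thus ?thesis using jH H by (simp add: sg_neg)
      qed
      moreover have "nat \<bar>j\<bar> > 0" using j0 by simp
      ultimately show False using False by blast
    qed
  qed (simp add: sg_0 H)
  thus ?thesis by (intro exI[of _ 0]) simp
qed

definition PG :: "'a::ab_group_add set \<Rightarrow> 'a set \<Rightarrow> ('a \<Rightarrow> 'a) \<Rightarrow> ('a \<times> 'a) set set" where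
  "PG S C h = {G. (\<forall>a b b'. (a,b)\<in>G \<longrightarrow> (a,b')\<in>G \<longrightarrow> b = b') \<and> is_subgroup (Domain G) \<and>
     (\<forall>a b. (a,b) \<in> G \<longrightarrow> b \<in> C) \<and>
     (\<forall>a b a' b'. (a,b)\<in>G \<longrightarrow> (a',b')\<in>G \<longrightarrow> (a+a', b+b') \<in> G) \<and> (\<forall>z\<in>S. (z, h z) \<in> G)}"

lemma PG_fun: "G \<in> PG S C h \<Longrightarrow> (a,b)\<in>G \<Longrightarrow> (a,b')\<in>G \<Longrightarrow> b = b'"
  unfolding PG_def by blast
lemma PG_sg: "G \<in> PG S C h \<Longrightarrow> is_subgroup (Domain G)"
  unfolding PG_def by blast
lemma PG_C: "G \<in> PG S C h \<Longrightarrow> (a,b)\<in>G \<Longrightarrow> b \<in> C"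
  unfolding PG_def by blast
lemma PG_add: "G \<in> PG S C h \<Longrightarrow> (a,b)\<in>G \<Longrightarrow> (a',b')\<in>G \<Longrightarrow> (a+a', b+b') \<in> G"
  unfolding PG_def by blast
lemma PG_S: "G \<in> PG S C h \<Longrightarrow> z \<in> S \<Longrightarrow> (z, h z) \<in> G"
  unfolding PG_def by blast
lemma PG_I:
  assumes "\<And>a b b'. (a,b)\<in>G \<Longrightarrow> (a,b')\<in>G \<Longrightarrow> b = b'" "is_subgroup (Domain G)"
    "\<And>a b. (a,b) \<in> G \<Longrightarrow> b \<in> C" "\<And>a b a' b'. (a,b)\<in>G \<Longrightarrow> (a',b')\<in>G \<Longrightarrow> (a+a', b+b') \<in> G"
    "\<And>z. z\<in>S \<Longrightarrow> (z, h z) \<in> G"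
  shows "G \<in> PG S C h"
  unfolding PG_def using assms by blast

lemma PG_chain:
  assumes S: "is_subgroup S" and C: "is_subgroup C" and hC: "\<forall>x\<in>S. h x \<in> C"
    and hadd: "\<forall>x\<in>S. \<forall>y\<in>S. h (x+y) = h x + h y"
    and Ch: "Ch \<in> chains (PG S C h)"
  shows "\<exists>U\<in>PG S C h. \<forall>X\<in>Ch. X \<subseteq> U"
proof -
  define G0 where "G0 = {(z, h z) | z. z \<in> S}"
  have DG0: "Domain G0 = S" unfolding G0_def by auto
  have G0P: "G0 \<in> PG S C h"
  proof (rule PG_I)
    show "is_subgroup (Domain G0)" using DG0 S by simp
    fix a b a' b' assume "(a,b) \<in> G0" "(a',b') \<in> G0"
    thus "(a+a', b+b') \<in> G0" using hadd S unfolding G0_def by (auto intro: sg_add)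
  next
    fix a b b' assume "(a,b) \<in> G0" "(a,b') \<in> G0"
    thus "b = b'" unfolding G0_def by auto
  next
    fix a b assume "(a,b) \<in> G0" thus "b \<in> C" using hC unfolding G0_def by auto
  next
    fix z assume "z \<in> S" thus "(z, h z) \<in> G0" unfolding G0_def by auto
  qed
  have G0sub: "G0 \<subseteq> X" if "X \<in> PG S C h" for X
    using PG_S[OF that] unfolding G0_def by blast
  define Ch' where "Ch' = insert G0 Ch"
  have ChP: "Ch \<subseteq> PG S C h" and Chc: "\<forall>X\<in>Ch. \<forall>Y\<in>Ch. X \<subseteq> Y \<or> Y \<subseteq> X"
    using Ch unfolding chains_def chain_subset_def by auto
  have Ch'P: "Ch' \<subseteq> PG S C h" using ChP G0P unfolding Ch'_def by simp
  have two: "\<exists>Z\<in>Ch'. X \<subseteq> Z \<and> Y \<subseteq> Z" if X: "X \<in> Ch'" and Y: "Y \<in> Ch'" for X Y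
  proof -
    have "X \<subseteq> Y \<or> Y \<subseteq> X" 
    proof (cases "X = G0")
      case True thus ?thesis using G0sub Y Ch'P by blast
    next
      case False
      show ?thesis
      proof (cases "Y = G0")
        case True thus ?thesis using G0sub X Ch'P by blast
      next
        case False
        hence "X \<in> Ch" "Y \<in> Ch" using X Y \<open>X \<noteq> G0\<close> unfolding Ch'_def by auto
        thus ?thesis using Chc by blast
      qed
    qed
    thus ?thesis using X Y by blast
  qed
  define U where "U = \<Union>Ch'"
  have U2: "\<exists>Z\<in>Ch'. (a,b) \<in> Z \<and> (a',b') \<in> Z" if "(a,b) \<in> U" "(a',b') \<in> U" for a b a' b'
  proof -
    from that obtain X Y where "X \<in> Ch'" "Y \<in> Ch'" "(a,b) \<in> X" "(a',b') \<in> Y" unfolding U_def by auto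
    with two[of X Y] show ?thesis by blast
  qed
  have ZP: "Z \<in> PG S C h" if "Z \<in> Ch'" for Z using that Ch'P by blast
  have "U \<in> PG S C h"
  proof (rule PG_I)
    fix a b b' assume "(a,b) \<in> U" "(a,b') \<in> U"
    then obtain Z where "Z \<in> Ch'" "(a,b) \<in> Z" "(a,b') \<in> Z" using U2 by blast
    thus "b = b'" using ZP PG_fun by metis
  next
    fix a b assume "(a,b) \<in> U"
    then obtain Z where "Z \<in> Ch'" "(a,b) \<in> Z" unfolding U_def by blast
    thus "b \<in> C" using ZP PG_C by metis
  next
    fix a b a' b' assume "(a,b) \<in> U" "(a',b') \<in> U"
    then obtain Z where "Z \<in> Ch'" "(a,b) \<in> Z" "(a',b') \<in> Z" using U2 by blast
    hence "(a+a', b+b') \<in> Z" using ZP PG_add by metis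
    thus "(a+a', b+b') \<in> U" using \<open>Z \<in> Ch'\<close> unfolding U_def by blast
  next
    fix z assume "z \<in> S"
    thus "(z, h z) \<in> U" unfolding U_def Ch'_def G0_def by blast
  next
    show "is_subgroup (Domain U)" unfolding is_subgroup_def
    proof (intro conjI ballI)
      have "0 \<in> Domain G0" using DG0 S by (simp add: sg_0)
      thus "0 \<in> Domain U" unfolding U_def Ch'_def by blast
    next
      fix x y assume "x \<in> Domain U" "y \<in> Domain U"
      then obtain b b' where "(x,b) \<in> U" "(y,b') \<in> U" by auto
      then obtain Z where "Z \<in> Ch'" "(x,b) \<in> Z" "(y,b') \<in> Z" using U2 by blast
      hence "(x+y, b+b') \<in> Z" using ZP PG_add by metis
      thus "x + y \<in> Domain U" using \<open>Z \<in> Ch'\<close> unfolding U_def by blast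
    next
      fix x assume "x \<in> Domain U"
      then obtain Z where Z: "Z \<in> Ch'" "x \<in> Domain Z" unfolding U_def by auto
      hence "is_subgroup (Domain Z)" using ZP PG_sg by metis
      hence "- x \<in> Domain Z" using Z by (simp add: sg_neg)
      thus "- x \<in> Domain U" using Z unfolding U_def by blast
    qed
  qed
  moreover have "\<forall>X\<in>Ch. X \<subseteq> U" unfolding U_def Ch'_def by blast
  ultimately show ?thesis by blast
qed

lemma extend_hom:
  fixes S C :: "'a::ab_group_add set" and h :: "'a \<Rightarrow> 'a"
  assumes S: "is_subgroup S" and C: "is_subgroup C" and hC: "\<forall>x\<in>S. h x \<in> C"
    and hadd: "\<forall>x\<in>S. \<forall>y\<in>S. h (x+y) = h x + h y"
    and step: "\<And>H \<phi> x m. is_subgroup H \<Longrightarrow> S \<subseteq> H \<Longrightarrow> (\<forall>z\<in>H. \<phi> z \<in> C) \<Longrightarrow>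
        (\<forall>u\<in>H. \<forall>v\<in>H. \<phi> (u+v) = \<phi> u + \<phi> v) \<Longrightarrow> (\<forall>z\<in>S. \<phi> z = h z) \<Longrightarrow> m > 0 \<Longrightarrow>
        zmul m x \<in> H \<Longrightarrow> \<exists>c\<in>C. zmul m c = \<phi> (zmul m x)"
  shows "\<exists>F\<in>End. (\<forall>x. F x \<in> C) \<and> (\<forall>x\<in>S. F x = h x)"
proof -
  obtain M where MP: "M \<in> PG S C h" and Mmax: "\<forall>X\<in>PG S C h. M \<subseteq> X \<longrightarrow> X = M"
    using Zorn_Lemma2[of "PG S C h"] PG_chain[OF S C hC hadd] by blast
  define H where "H = Domain M"
  define \<phi> where "\<phi> = (\<lambda>a. THE b. (a,b) \<in> M)"
  have Hsg: "is_subgroup H" unfolding H_def using PG_sg[OF MP] .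
  have phiM: "(a, \<phi> a) \<in> M" if "a \<in> H" for a
  proof -
    from that obtain b where b: "(a,b) \<in> M" unfolding H_def by auto
    have "\<phi> a = b" unfolding \<phi>_def using b PG_fun[OF MP] by blast
    thus ?thesis using b by simp
  qed
  have phiEq: "\<phi> a = b" if "(a,b) \<in> M" for a b
    unfolding \<phi>_def using that PG_fun[OF MP] by blast
  have phiC: "\<forall>z\<in>H. \<phi> z \<in> C" using phiM PG_C[OF MP] by blast
  have phiadd: "\<forall>u\<in>H. \<forall>v\<in>H. \<phi> (u+v) = \<phi> u + \<phi> v"
    using phiM phiEq PG_add[OF MP] by metis
  have SH: "S \<subseteq> H" unfolding H_def using PG_S[OF MP] by blast
  have phih: "\<forall>z\<in>S. \<phi> z = h z" using PG_S[OF MP] phiEq by blast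
  have HU: "H = UNIV"
  proof (rule ccontr)
    assume "H \<noteq> UNIV"
    then obtain x where xH: "x \<notin> H" by auto
    obtain m0 where m0: "m0 \<ge> 0" "\<And>j. zmul j x \<in> H \<longleftrightarrow> m0 dvd j"
      using ideal_gen[OF Hsg, of x] by blast
    obtain c where cC: "c \<in> C" and cm: "zmul m0 c = \<phi> (zmul m0 x)"
    proof (cases "m0 = 0")
      case True
      have "\<phi> 0 = 0" using phom_0[OF Hsg phiadd] .
      thus ?thesis using that[of 0] True C by (simp add: sg_0)
    next
      case False
      hence "m0 > 0" using m0 by simp
      moreover have "zmul m0 x \<in> H" using m0 by simp
      ultimately show ?thesis using step[OF Hsg SH phiC phiadd phih] that by blast
    qed
    define G' where "G' = {(a + zmul j x, \<phi> a + zmul j c) | a j. a \<in> H}"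
    have key: "\<phi> a + zmul j c = \<phi> a' + zmul j' c"
      if "a \<in> H" "a' \<in> H" "a + zmul j x = a' + zmul j' x" for a a' j j'
    proof -
      have "zmul (j - j') x = a' - a" using that(3) by (simp add: zmul_diff algebra_simps)
      moreover have "a' - a \<in> H" using Hsg that by (simp add: sg_diff)
      ultimately have "m0 dvd (j - j')" using m0(2) by metis
      then obtain t where t: "j - j' = m0 * t" by (auto elim: dvdE)
      have m0xH: "zmul m0 x \<in> H" using m0 by simp
      have "\<phi> a' - \<phi> a = \<phi> (a' - a)" using phom_diff[OF Hsg phiadd] that by simp
      also have "\<dots> = \<phi> (zmul t (zmul m0 x))"
        using \<open>zmul (j - j') x = a' - a\<close> t by (metis zmul_mult mult.commute)
      also have "\<dots> = zmul t (zmul m0 c)" using phom_zmul[OF Hsg phiadd m0xH] cm by simp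
      also have "\<dots> = zmul (j - j') c" using t by (metis zmul_mult mult.commute)
      finally show ?thesis by (simp add: zmul_diff algebra_simps)
    qed
    have G'P: "G' \<in> PG S C h"
    proof (rule PG_I)
      fix p b b' assume "(p,b) \<in> G'" "(p,b') \<in> G'"
      then obtain a j a' j' where "a \<in> H" "a' \<in> H" "p = a + zmul j x" "b = \<phi> a + zmul j c"
        "p = a' + zmul j' x" "b' = \<phi> a' + zmul j' c" unfolding G'_def by blast
      thus "b = b'" using key by metis
    next
      fix p b assume "(p,b) \<in> G'"
      then obtain a j where "a \<in> H" "b = \<phi> a + zmul j c" unfolding G'_def by blast
      thus "b \<in> C" using phiC cC C by (simp add: sg_add sg_zmul)
    next
      fix p b p' b' assume "(p,b) \<in> G'" "(p',b') \<in> G'"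
      then obtain a j a' j' where A: "a \<in> H" "a' \<in> H" "p = a + zmul j x" "b = \<phi> a + zmul j c"
        "p' = a' + zmul j' x" "b' = \<phi> a' + zmul j' c" unfolding G'_def by blast
      have "(a + a') \<in> H" using A Hsg by (simp add: sg_add)
      moreover have "p + p' = (a + a') + zmul (j + j') x" using A by (simp add: zmul_add algebra_simps)
      moreover have "b + b' = \<phi> (a + a') + zmul (j + j') c" using A phiadd by (simp add: zmul_add algebra_simps)
      ultimately show "(p + p', b + b') \<in> G'" unfolding G'_def by blast
    next
      fix z assume "z \<in> S"
      hence "z \<in> H" "\<phi> z = h z" using SH phih by auto
      hence "z = z + zmul 0 x \<and> h z = \<phi> z + zmul 0 c" by simp
      thus "(z, h z) \<in> G'" unfolding G'_def using \<open>z \<in> H\<close> by blast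
    next
      show "is_subgroup (Domain G')" unfolding is_subgroup_def
      proof (intro conjI ballI)
        have "0 = 0 + zmul 0 x" by simp
        thus "0 \<in> Domain G'" unfolding G'_def using Hsg sg_0 by blast
      next
        fix p q assume "p \<in> Domain G'" "q \<in> Domain G'"
        then obtain a j a' j' where A: "a \<in> H" "a' \<in> H" "p = a + zmul j x" "q = a' + zmul j' x"
          unfolding G'_def by blast
        have "a + a' \<in> H" using A Hsg by (simp add: sg_add)
        moreover have "p + q = (a + a') + zmul (j + j') x" using A by (simp add: zmul_add algebra_simps)
        ultimately show "p + q \<in> Domain G'" unfolding G'_def by blast
      next
        fix p assume "p \<in> Domain G'"
        then obtain a j where A: "a \<in> H" "p = a + zmul j x" unfolding G'_def by blast
        have "- a \<in> H" using A Hsg by (simp add: sg_neg)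
        moreover have "- p = (- a) + zmul (- j) x" using A by (simp add: zmul_uminus)
        ultimately show "- p \<in> Domain G'" unfolding G'_def by blast
      qed
    qed
    have MG': "M \<subseteq> G'"
    proof
      fix q assume "q \<in> M"
      then obtain a b where q: "q = (a,b)" "(a,b) \<in> M" by (cases q) auto
      hence "a \<in> H" "b = \<phi> a" unfolding H_def using phiEq by auto
      hence "a = a + zmul 0 x \<and> b = \<phi> a + zmul 0 c" by simp
      thus "q \<in> G'" unfolding G'_def using q \<open>a \<in> H\<close> by blast
    qed
    have "x = 0 + zmul 1 x \<and> \<phi> 0 + c = \<phi> 0 + zmul 1 c" by simp
    hence "(x, \<phi> 0 + c) \<in> G'" unfolding G'_def using Hsg sg_0 by blast
    moreover have "G' = M" using Mmax G'P MG' by blast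
    ultimately have "x \<in> H" unfolding H_def by auto
    with xH show False by simp
  qed
  have "\<phi> \<in> End" unfolding End_def using phiadd HU by simp
  moreover have "\<forall>x. \<phi> x \<in> C" using phiC HU by simp
  ultimately show ?thesis using phih by blast
qed

definition Good :: "'a::ab_group_add \<Rightarrow> bool" where
  "Good x \<longleftrightarrow> (\<forall>f\<in>End. \<forall>g\<in>End. f (g x) = g (f x))"

lemma Good_add: "Good x \<Longrightarrow> Good y \<Longrightarrow> Good (x + y)"
  unfolding Good_def by (simp add: End_add)
lemma Good_zmul: "Good x \<Longrightarrow> Good (zmul j x)"
  unfolding Good_def by (simp add: End_zmul)
lemma Good_0: "Good 0"
  unfolding Good_def by (simp add: End_0)

lemma divisible_zmul: "divisible_subgroup E \<Longrightarrow> w \<in> E \<Longrightarrow> m > 0 \<Longrightarrow> \<exists>c\<in>E. zmul m c = w"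
proof -
  assume "divisible_subgroup E" "w \<in> E" "m > 0"
  moreover have "nat m > 0" using \<open>m > 0\<close> by simp
  ultimately obtain c where "c \<in> E" "nsmul (nat m) c = w" unfolding divisible_subgroup_def by blast
  moreover have "zmul m c = nsmul (nat m) c" using zmul_nat[of "nat m" c] \<open>m > 0\<close> by simp
  ultimately show ?thesis by auto
qed

lemma ext_div:
  fixes S E :: "'a::ab_group_add set"
  assumes E: "divisible_subgroup E" and S: "is_subgroup S" and hE: "\<forall>x\<in>S. h x \<in> E"
    and hadd: "\<forall>x\<in>S. \<forall>y\<in>S. h (x+y) = h x + h y"
  shows "\<exists>F\<in>End. (\<forall>x. F x \<in> E) \<and> (\<forall>x\<in>S. F x = h x)"
proof (rule extend_hom[OF S _ hE hadd])
  show "is_subgroup E" using E unfolding divisible_subgroup_def by simp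
  fix H \<phi> x m
  assume "is_subgroup H" "S \<subseteq> H" "\<forall>z\<in>H. \<phi> z \<in> E" "0 < m" "zmul m x \<in> H"
  thus "\<exists>c\<in>E. zmul m c = \<phi> (zmul m x)" using divisible_zmul[OF E] by blast
qed

lemma proj_div:
  fixes E :: "'a::ab_group_add set"
  assumes E: "divisible_subgroup E"
  shows "\<exists>F\<in>End. (\<forall>x. F x \<in> E) \<and> (\<forall>x\<in>E. F x = x)"
proof -
  have S: "is_subgroup E" using E unfolding divisible_subgroup_def by blast
  have "\<forall>x\<in>E. x \<in> E" by blast
  moreover have "\<forall>x\<in>E. \<forall>y\<in>E. x + y = x + y" by blast
  ultimately show ?thesis using ext_div[OF E S, of "\<lambda>x. x"] by simp
qed

lemma inv_proj:
  assumes CE: "End_centrally_essential TYPE('a::ab_group_add)"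
    and \<pi>: "\<pi> \<in> End" "\<forall>x. \<pi> x \<in> E" "\<forall>x\<in>E. \<pi> x = (x::'a)" and f: "f \<in> End" and x: "x \<in> E"
  shows "f x \<in> E"
proof -
  have idem: "\<pi> (\<pi> z) = \<pi> z" for z using \<pi>(2,3) by blast
  have "\<pi> (f x) = f (\<pi> x)" using idem_central[OF CE \<pi>(1) idem f] .
  moreover have "\<pi> x = x" using x \<pi>(3) by blast
  ultimately have "f x = \<pi> (f x)" by simp
  thus ?thesis using \<pi>(2) by metis
qed

lemma inv_div:
  assumes CE: "End_centrally_essential TYPE('a::ab_group_add)"
    and E: "divisible_subgroup E" and f: "f \<in> End" and x: "x \<in> (E::'a set)"
  shows "f x \<in> E"
proof -
  obtain \<pi> where "\<pi> \<in> End" "\<forall>x. \<pi> x \<in> E" "\<forall>x\<in>E. \<pi> x = x" using proj_div[OF E] by blast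
  from inv_proj[OF CE this f x] show ?thesis .
qed

lemma chain_prod:
  assumes A: "\<And>i. s i = zmul (N i) (s (Suc i))"
  shows "i \<le> l \<Longrightarrow> s i = zmul (\<Prod>k\<in>{i..<l}. N k) (s l)"
proof (induction l)
  case 0 thus ?case by simp
next
  case (Suc l)
  show ?case
  proof (cases "i = Suc l")
    case True thus ?thesis by simp
  next
    case False
    hence "i \<le> l" using Suc by simp
    hence "s i = zmul (\<Prod>k\<in>{i..<l}. N k) (s l)" using Suc.IH by blast
    also have "s l = zmul (N l) (s (Suc l))" by (rule A)
    finally have "s i = zmul (\<Prod>k\<in>{i..<l}. N k) (zmul (N l) (s (Suc l)))" .
    also have "\<dots> = zmul ((\<Prod>k\<in>{i..<l}. N k) * N l) (s (Suc l))" by (simp add: zmul_mult)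
    also have "(\<Prod>k\<in>{i..<l}. N k) * N l = (\<Prod>k\<in>{i..<Suc l}. N k)"
      using \<open>i \<le> l\<close> by (rule prod.atLeastLessThan_Suc[symmetric])
    finally show ?thesis .
  qed
qed

lemma chain_sg:
  assumes "\<And>i. s i = zmul (N i) (s (Suc i))"
  shows "is_subgroup {zmul j (s i) | j i. True}"
  unfolding is_subgroup_def
proof (intro conjI ballI)
  have "(0::'a) = zmul 0 (s 0)" by simp
  thus "0 \<in> {zmul j (s i) | j i. True}" by blast
next
  fix x y assume "x \<in> {zmul j (s i) | j i. True}" "y \<in> {zmul j (s i) | j i. True}"
  then obtain j i j' i' where xy: "x = zmul j (s i)" "y = zmul j' (s i')" by blast
  define K where "K = max i i'"
  have iK: "i \<le> K" "i' \<le> K" unfolding K_def by auto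
  note e1 = chain_prod[of s N, OF assms iK(1)]
  note e2 = chain_prod[of s N, OF assms iK(2)]
  have "x + y = zmul (j * (\<Prod>k\<in>{i..<K}. N k) + j' * (\<Prod>k\<in>{i'..<K}. N k)) (s K)"
    unfolding xy zmul_add zmul_mult e1[symmetric] e2[symmetric] ..
  thus "x + y \<in> {zmul j (s i) | j i. True}" by blast
next
  fix x assume "x \<in> {zmul j (s i) | j i. True}"
  then obtain j i where "x = zmul j (s i)" by blast
  hence "- x = zmul (-j) (s i)" by (simp add: zmul_uminus)
  thus "- x \<in> {zmul j (s i) | j i. True}" by blast
qed

lemma chain_lift:
  assumes "\<And>i. s i = zmul (N i) (s (Suc i))" and "x \<in> {zmul j (s i) | j i. True}"
  shows "\<exists>i. \<forall>K\<ge>i. \<exists>a. x = zmul a (s K)"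
proof -
  obtain j i where x: "x = zmul j (s i)" using assms(2) by blast
  have "\<forall>K\<ge>i. \<exists>a. x = zmul a (s K)"
  proof (intro allI impI)
    fix K assume "i \<le> K"
    hence "s i = zmul (\<Prod>k\<in>{i..<K}. N k) (s K)" using chain_prod[of s N, OF assms(1), of i K] by blast
    hence "x = zmul (j * (\<Prod>k\<in>{i..<K}. N k)) (s K)" using x by (simp add: zmul_mult)
    thus "\<exists>a. x = zmul a (s K)" by blast
  qed
  thus ?thesis by blast
qed

lemma zmul_comm: "zmul a (zmul b x) = zmul b (zmul a x)"
  by (metis zmul_mult mult.commute)

lemma nsmul_zmul: "nsmul n x = zmul (int n) x" by (simp add: zmul_nat)

lemma good_inf:
  assumes CE: "End_centrally_essential TYPE('a::ab_group_add)"
    and D: "divisible_subgroup D" and dD: "d \<in> (D::'a set)"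
    and tf: "\<And>j. zmul j d = 0 \<Longrightarrow> j = 0"
  shows "Good d"
proof -
  define s where "s = rec_nat d (\<lambda>i z. SOME w. w \<in> D \<and> zmul (int (Suc i)) w = z)"
  have s0: "s 0 = d" unfolding s_def by simp
  have sS: "s (Suc i) = (SOME w. w \<in> D \<and> zmul (int (Suc i)) w = s i)" for i unfolding s_def by simp
  have sD: "s i \<in> D \<and> s i = zmul (int (Suc i)) (s (Suc i)) \<and> s (Suc i) \<in> D" for i
  proof (induction i)
    case 0
    have "\<exists>w. w \<in> D \<and> zmul (int (Suc 0)) w = s 0" using divisible_zmul[OF D] dD s0 by force
    hence "s (Suc 0) \<in> D \<and> zmul (int (Suc 0)) (s (Suc 0)) = s 0" unfolding sS by (rule someI_ex)
    thus ?case using dD s0 by simp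
  next
    case (Suc i)
    have "\<exists>w. w \<in> D \<and> zmul (int (Suc (Suc i))) w = s (Suc i)" using divisible_zmul[OF D] Suc by force
    hence "s (Suc (Suc i)) \<in> D \<and> zmul (int (Suc (Suc i))) (s (Suc (Suc i))) = s (Suc i)" unfolding sS by (rule someI_ex)
    thus ?case using Suc by simp
  qed
  define N where "N = (\<lambda>i. int (Suc i))"
  have ch: "s i = zmul (N i) (s (Suc i))" for i using conjunct1[OF conjunct2[OF sD[of i]]] unfolding N_def .
  define E where "E = {zmul j (s i) | j i. True}"
  have Esg: "is_subgroup E" unfolding E_def by (rule chain_sg[of s N, OF ch])
  have Ediv: "divisible_subgroup E" unfolding divisible_subgroup_def
  proof (intro conjI ballI allI impI)
    show "is_subgroup E" by (rule Esg)
    fix w and n :: nat assume "w \<in> E" "n > 0"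
    then obtain j i where w: "w = zmul j (s i)" unfolding E_def by blast
    define l where "l = n * (i + 1) - 1"
    have Sl: "Suc l = n * (i+1)" unfolding l_def using \<open>n > 0\<close> by (cases n) auto
    have il: "i \<le> l" unfolding l_def using \<open>n > 0\<close> by (cases n) auto
    have "s i = zmul (\<Prod>k\<in>{i..<l}. N k) (s l)" by (rule chain_prod[of s N, OF ch il])
    also have "s l = zmul (N l) (s (Suc l))" by (rule ch)
    finally have "w = zmul (j * (\<Prod>k\<in>{i..<l}. N k) * N l) (s (Suc l))" using w by (simp add: zmul_mult)
    also have "j * (\<Prod>k\<in>{i..<l}. N k) * N l = int n * (j * (\<Prod>k\<in>{i..<l}. N k) * int (i+1))"
    proof -
      have "N l = int n * int (i+1)" unfolding N_def using Sl by (metis of_nat_mult)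
      thus ?thesis by (simp add: algebra_simps)
    qed
    finally have "w = nsmul n (zmul (j * (\<Prod>k\<in>{i..<l}. N k) * int (i+1)) (s (Suc l)))"
      by (simp add: zmul_mult nsmul_zmul)
    moreover have "zmul (j * (\<Prod>k\<in>{i..<l}. N k) * int (i+1)) (s (Suc l)) \<in> E" unfolding E_def by blast
    ultimately show "\<exists>e\<in>E. nsmul n e = w" by blast
  qed
  have Etf: "w = 0" if wE: "w \<in> E" and Mw: "M \<noteq> 0" "zmul M w = 0" for w M
  proof -
    obtain j i where w: "w = zmul j (s i)" using wE unfolding E_def by blast
    have "s 0 = zmul (\<Prod>k\<in>{0..<i}. N k) (s i)" by (rule chain_prod[of s N, OF ch]) simp
    hence "zmul (M * j) d = zmul (\<Prod>k\<in>{0..<i}. N k) (zmul M w)" using s0 w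
      by (simp add: zmul_mult zmul_comm[of "\<Prod>k\<in>{0..<i}. N k"])
    also have "\<dots> = 0" using Mw(2) by simp
    finally have "M * j = 0" by (rule tf)
    hence "j = 0" using Mw(1) by simp
    thus ?thesis using w by simp
  qed
  have "d = zmul 1 (s 0)" using s0 by simp
  hence dE: "d \<in> E" unfolding E_def by blast
  have inv: "f x \<in> E" if "f \<in> End" "x \<in> E" for f x using inv_div[OF CE Ediv that] .
  show ?thesis unfolding Good_def
  proof (intro ballI)
    fix f g :: "'a \<Rightarrow> 'a" assume f: "f \<in> End" and g: "g \<in> End"
    have fd: "f d \<in> E" and gd: "g d \<in> E" using inv f g dE by auto
    obtain i1 where i1: "\<forall>K\<ge>i1. \<exists>a. f d = zmul a (s K)" using chain_lift[of s N, OF ch fd[unfolded E_def]] by blast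
    obtain i2 where i2: "\<forall>K\<ge>i2. \<exists>a. g d = zmul a (s K)" using chain_lift[of s N, OF ch gd[unfolded E_def]] by blast
    define K where "K = max i1 i2"
    have K1: "K \<ge> i1" and K2: "K \<ge> i2" unfolding K_def by auto
    obtain a where a: "f d = zmul a (s K)" using i1 K1 by blast
    obtain b where b: "g d = zmul b (s K)" using i2 K2 by blast
    define M where "M = (\<Prod>k\<in>{0..<K}. N k)"
    have M0: "M \<noteq> 0" unfolding M_def N_def by (simp add: prod_zero_iff)
    have dM: "d = zmul M (s K)" unfolding M_def using chain_prod[of s N, OF ch, of 0 K] s0 by simp
    have 1: "zmul M (f (g d)) = zmul b (zmul a (s K))"
    proof -
      have "zmul M (f (g d)) = zmul M (zmul b (f (s K)))" using b f by (simp add: End_zmul)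
      also have "\<dots> = zmul b (f (zmul M (s K)))" using f by (simp add: End_zmul zmul_comm)
      also have "\<dots> = zmul b (zmul a (s K))" using dM a by simp
      finally show ?thesis .
    qed
    have 2: "zmul M (g (f d)) = zmul a (zmul b (s K))"
    proof -
      have "zmul M (g (f d)) = zmul M (zmul a (g (s K)))" using a g by (simp add: End_zmul)
      also have "\<dots> = zmul a (g (zmul M (s K)))" using g by (simp add: End_zmul zmul_comm)
      also have "\<dots> = zmul a (zmul b (s K))" using dM b by simp
      finally show ?thesis .
    qed
    have "zmul M (f (g d) - g (f d)) = 0" using 1 2 by (simp add: zmul_minus zmul_comm)
    moreover have "f (g d) - g (f d) \<in> E" using inv f g fd gd Esg by (simp add: sg_diff)
    ultimately have "f (g d) - g (f d) = 0" using Etf M0 by blast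
    thus "f (g d) = g (f d)" by simp
  qed
qed

lemma bezout_coprime: "coprime (a::int) b \<Longrightarrow> \<exists>u v. u * a + v * b = 1"
  using bezout_int[of a b] by (simp add: coprime_iff_gcd_eq_1)

lemma zmul_comb: "zmul (u * a + v * b) x = zmul u (zmul a x) + zmul v (zmul b x)"
  by (simp add: zmul_add zmul_mult)

lemma order_p:
  assumes P: "prime (P::int)" and c0: "c \<noteq> 0" and Pc: "zmul P c = 0" and jc: "zmul j c = 0"
  shows "P dvd j"
proof (rule ccontr)
  assume "\<not> P dvd j"
  hence "coprime P j" by (rule prime_imp_coprime[OF P])
  then obtain u v where "u * P + v * j = 1" using bezout_coprime by blast
  hence "c = zmul (u * P + v * j) c" by simp
  also have "\<dots> = 0" unfolding zmul_comb using Pc jc by simp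
  finally show False using c0 by simp
qed

lemma pdecomp:
  assumes P: "prime (P::int)"
  shows "P ^ N dvd j \<or> (\<exists>a<N. \<exists>u. j = P ^ a * u \<and> \<not> P dvd u)"
proof (induction N)
  case 0 thus ?case by simp
next
  case (Suc N)
  show ?case
  proof (cases "P ^ N dvd j")
    case True
    then obtain u where u: "j = P ^ N * u" by (auto elim: dvdE)
    show ?thesis
    proof (cases "P dvd u")
      case True
      then obtain u' where "u = P * u'" by (auto elim: dvdE)
      hence "j = P ^ Suc N * u'" using u by (simp add: algebra_simps)
      thus ?thesis by simp
    next
      case False thus ?thesis using u by blast
    qed
  next
    case False
    with Suc.IH obtain a u where "a < N" "j = P ^ a * u" "\<not> P dvd u" by blast
    thus ?thesis by (intro disjI2 exI[of _ a]) auto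
  qed
qed

lemma exact_order:
  assumes P: "prime (P::int)" and N: "N \<ge> 1" and w0: "zmul (P ^ N) w = 0"
    and w1: "zmul (P ^ (N - 1)) w \<noteq> 0"
  shows "zmul j w = 0 \<longleftrightarrow> P ^ N dvd j"
proof
  assume jw: "zmul j w = 0"
  show "P ^ N dvd j"
  proof (rule ccontr)
    assume nd: "\<not> P ^ N dvd j"
    then obtain a u where a: "a < N" "j = P ^ a * u" "\<not> P dvd u" using pdecomp[OF P, of N j] by blast
    define c where "c = zmul (P ^ (N - 1)) w"
    have Pc: "zmul P c = 0" unfolding c_def using w0 N
      by (metis zmul_mult power_Suc Suc_diff_le diff_Suc_1 le_add_diff_inverse2 plus_1_eq_Suc)
    have "P ^ (N - 1) * u = P ^ (N - 1 - a) * j" using a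
      by (simp add: power_add[symmetric] mult.assoc[symmetric])
    hence "zmul u c = zmul (P ^ (N - 1 - a)) (zmul j w)" unfolding c_def
      by (simp add: zmul_mult[symmetric] mult.commute)
    hence "zmul u c = 0" using jw by simp
    hence "P dvd u" using order_p[OF P _ Pc] w1 unfolding c_def by blast
    thus False using a by simp
  qed
next
  assume "P ^ N dvd j"
  then obtain t where "j = P ^ N * t" by (auto elim: dvdE)
  thus "zmul j w = 0" using w0 by (simp add: zmul_mult mult.commute)
qed

lemma exists_exact:
  assumes k0: "k \<noteq> 0" and km: "zmul ((P::int) ^ m) k = 0"
  shows "\<exists>N\<ge>1. zmul (P ^ N) k = 0 \<and> zmul (P ^ (N - 1)) k \<noteq> 0"
proof -
  define N where "N = (LEAST N. zmul (P ^ N) k = 0)"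
  have NK: "zmul (P ^ N) k = 0" unfolding N_def using km by (rule LeastI)
  have N1: "N \<ge> 1" using NK k0 by (cases N) auto
  have "zmul (P ^ (N - 1)) k \<noteq> 0"
  proof
    assume "zmul (P ^ (N - 1)) k = 0"
    hence "N \<le> N - 1" unfolding N_def by (rule Least_le)
    thus False using N1 by simp
  qed
  thus ?thesis using N1 NK by blast
qed

lemma div_primes:
  assumes E: "is_subgroup E" and pr: "\<And>w q. w \<in> E \<Longrightarrow> prime (q::nat) \<Longrightarrow> \<exists>z\<in>E. zmul (int q) z = w"
  shows "divisible_subgroup E"
proof -
  have main: "\<forall>w\<in>E. \<exists>z\<in>E. zmul (int n) z = w" if "n > 0" for n
    using that
  proof (induction n rule: less_induct)
    case (less n)
    show ?case
    proof (cases "n = 1")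
      case True thus ?thesis by simp
    next
      case False
      then obtain q where q: "prime q" "q dvd n" using prime_factor_nat by blast
      then obtain n' where n': "n = q * n'" by (auto elim: dvdE)
      have "q > 1" using q(1) by (rule prime_gt_1_nat)
      hence "n' < n" "n' > 0" using n' less.prems by auto
      show ?thesis
      proof
        fix w assume "w \<in> E"
        then obtain z1 where z1: "z1 \<in> E" "zmul (int n') z1 = w" using less.IH[OF \<open>n' < n\<close> \<open>n' > 0\<close>] by blast
        then obtain z2 where z2: "z2 \<in> E" "zmul (int q) z2 = z1" using pr q(1) by blast
        have "zmul (int n) z2 = zmul (int n') (zmul (int q) z2)" using n' by (simp add: zmul_mult[symmetric] mult.commute)
        hence "zmul (int n) z2 = w" using z1 z2 by simp
        thus "\<exists>z\<in>E. zmul (int n) z = w" using z2 by blast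
      qed
    qed
  qed
  show ?thesis unfolding divisible_subgroup_def
  proof (intro conjI ballI allI impI)
    show "is_subgroup E" by (rule E)
    fix d and n :: nat assume "d \<in> E" "n > 0"
    thus "\<exists>e\<in>E. nsmul n e = d" using main[of n] by (simp add: nsmul_zmul)
  qed
qed

lemma pdiv:
  fixes w :: "'a::ab_group_add"
  assumes H2: "\<And>c::'a. zmul (P::int) c = 0 \<Longrightarrow> \<forall>h. \<exists>z. zmul (P ^ h) z = c"
  shows "zmul (P ^ m) w = 0 \<Longrightarrow> \<exists>z. zmul P z = w \<and> zmul (P ^ (m + 1)) z = 0"
proof (induction m arbitrary: w)
  case 0
  hence "w = 0" by simp
  thus ?case by (intro exI[of _ 0]) simp
next
  case (Suc m)
  define c where "c = zmul (P ^ m) w"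
  have "zmul P c = 0" unfolding c_def using Suc.prems by (simp add: zmul_mult[symmetric] mult.commute)
  hence "\<forall>h. \<exists>z. zmul (P ^ h) z = c" by (rule H2)
  then obtain z1 where z1: "zmul (P ^ (m + 1)) z1 = c" by blast
  define w' where "w' = w - zmul P z1"
  have "zmul (P ^ m) w' = c - zmul (P ^ m * P) z1" unfolding w'_def c_def by (simp add: zmul_minus zmul_mult)
  also have "\<dots> = 0" using z1 by (simp add: mult.commute)
  finally obtain z2 where z2: "zmul P z2 = w'" "zmul (P ^ (m + 1)) z2 = 0" using Suc.IH by blast
  have "zmul P (z1 + z2) = w" using z2 unfolding w'_def by (simp add: zmul_plus)
  moreover have "zmul (P ^ (Suc m + 1)) (z1 + z2) = 0"
  proof -
    have "zmul (P ^ (Suc m + 1)) z1 = zmul P (zmul (P ^ (m + 1)) z1)" by (simp add: zmul_mult[symmetric])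
    hence "zmul (P ^ (Suc m + 1)) z1 = zmul P c" using z1 by simp
    moreover have "zmul (P ^ (Suc m + 1)) z2 = zmul P (zmul (P ^ (m + 1)) z2)"
      by (simp add: zmul_mult[symmetric] mult.commute)
    ultimately show ?thesis using \<open>zmul P c = 0\<close> z2 by (simp add: zmul_plus)
  qed
  ultimately show ?case by blast
qed

lemma good_of_mult:
  assumes "\<And>f. f \<in> End \<Longrightarrow> \<exists>t. f k = zmul t k"
  shows "Good k"
  unfolding Good_def
proof (intro ballI)
  fix f g :: "'a \<Rightarrow> 'a" assume f: "f \<in> End" and g: "g \<in> End"
  obtain a where a: "f k = zmul a k" using assms f by blast
  obtain b where b: "g k = zmul b k" using assms g by blast
  have "f (g k) = zmul b (zmul a k)" using a b f by (simp add: End_zmul)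
  also have "\<dots> = zmul a (zmul b k)" by (rule zmul_comm)
  also have "\<dots> = g (f k)" using a b g by (simp add: End_zmul)
  finally show "f (g k) = g (f k)" .
qed

lemma caseII_good:
  fixes k :: "'a::ab_group_add"
  assumes CE: "End_centrally_essential TYPE('a)" and P: "prime (P::int)"
    and H2: "\<And>c::'a. zmul P c = 0 \<Longrightarrow> \<forall>h. \<exists>z. zmul (P ^ h) z = c"
    and km: "zmul (P ^ m) k = 0"
  shows "Good k"
proof (cases "k = 0")
  case True thus ?thesis by (simp add: Good_0)
next
  case False
  obtain N where N1: "N \<ge> 1" and NK: "zmul (P ^ N) k = 0" and NK1: "zmul (P ^ (N - 1)) k \<noteq> 0"
    using exists_exact[OF False km] by blast
  define s where "s = rec_nat k (\<lambda>i z. SOME w. zmul P w = z \<and> zmul (P ^ (N + i + 1)) w = 0)"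
  have s0: "s 0 = k" unfolding s_def by simp
  have sS: "s (Suc i) = (SOME w. zmul P w = s i \<and> zmul (P ^ (N + i + 1)) w = 0)" for i
    unfolding s_def by simp
  have stepi: "zmul P (s (Suc i)) = s i \<and> zmul (P ^ (N + Suc i)) (s (Suc i)) = 0"
    if "zmul (P ^ (N + i)) (s i) = 0" for i
  proof -
    have "\<exists>w. zmul P w = s i \<and> zmul (P ^ (N + i + 1)) w = 0" by (rule pdiv[OF H2 that])
    hence "zmul P (s (Suc i)) = s i \<and> zmul (P ^ (N + i + 1)) (s (Suc i)) = 0"
      unfolding sS by (rule someI_ex)
    thus ?thesis by simp
  qed
  have sN: "zmul (P ^ (N + i)) (s i) = 0" for i
  proof (induction i)
    case 0 thus ?case using NK s0 by simp
  next
    case (Suc i) thus ?case using stepi by blast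
  qed
  have ch: "s i = zmul ((\<lambda>_. P) i) (s (Suc i))" for i using stepi[OF sN[of i]] by simp
  have spow: "s i = zmul (P ^ (l - i)) (s l)" if "i \<le> l" for i l
    using chain_prod[of s "\<lambda>_. P", OF ch that] by simp
  have sne: "zmul (P ^ (N + i - 1)) (s i) \<noteq> 0" for i
  proof -
    have "P ^ (N + i - 1) = P ^ (N - 1) * P ^ i" using N1 by (simp add: power_add[symmetric])
    hence "zmul (P ^ (N + i - 1)) (s i) = zmul (P ^ (N - 1)) (zmul (P ^ i) (s i))" by (simp add: zmul_mult)
    also have "zmul (P ^ i) (s i) = k" using spow[of 0 i] s0 by simp
    finally show ?thesis using NK1 by simp
  qed
  have ord: "zmul j (s i) = 0 \<longleftrightarrow> P ^ (N + i) dvd j" for j i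
    using exact_order[OF P _ sN[of i] sne[of i]] N1 by simp
  define E where "E = {zmul j (s i) | j i. True}"
  have Esg: "is_subgroup E" unfolding E_def by (rule chain_sg[of s "\<lambda>_. P", OF ch])
  have Ediv: "divisible_subgroup E"
  proof (rule div_primes[OF Esg])
    fix w and q :: nat assume wE: "w \<in> E" and q: "prime q"
    then obtain j i where w: "w = zmul j (s i)" unfolding E_def by blast
    show "\<exists>z\<in>E. zmul (int q) z = w"
    proof (cases "int q = P")
      case True
      have "zmul (int q) (zmul j (s (Suc i))) = w" using True w ch[of i] by (simp add: zmul_comm)
      moreover have "zmul j (s (Suc i)) \<in> E" unfolding E_def by blast
      ultimately show ?thesis by blast
    next
      case False
      have "prime (int q)" using q by simp
      hence "coprime (int q) P" using primes_coprime[OF _ P False] by blast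
      hence "coprime (int q) (P ^ (N + i))" by simp
      then obtain u v where uv: "u * int q + v * P ^ (N + i) = 1" using bezout_coprime by blast
      have "w = zmul (u * int q + v * P ^ (N + i)) w" using uv by simp
      also have "\<dots> = zmul (int q) (zmul u w) + zmul v (zmul j (zmul (P ^ (N + i)) (s i)))"
        unfolding zmul_comb w by (simp add: zmul_comm)
      also have "\<dots> = zmul (int q) (zmul u w)" using sN by simp
      finally have "zmul (int q) (zmul u w) = w" by simp
      moreover have "zmul u w = zmul (u * j) (s i)" using w by (simp add: zmul_mult)
      hence "zmul u w \<in> E" unfolding E_def by blast
      ultimately show ?thesis by blast
    qed
  qed
  have "k = zmul 1 (s 0)" using s0 by simp
  hence kE: "k \<in> E" unfolding E_def by blast
  show ?thesis
  proof (rule good_of_mult)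
    fix f :: "'a \<Rightarrow> 'a" assume f: "f \<in> End"
    have "f k \<in> E" by (rule inv_div[OF CE Ediv f kE])
    then obtain j i where fk: "f k = zmul j (s i)" unfolding E_def by blast
    have "zmul (P ^ N) (f k) = 0" using f NK by (simp add: End_zmul[symmetric] End_0)
    hence "zmul (P ^ N * j) (s i) = 0" using fk by (simp add: zmul_mult)
    hence "P ^ N * P ^ i dvd P ^ N * j" using ord by (simp add: power_add)
    hence "P ^ i dvd j" using P by (simp add: prime_gt_0_int)
    then obtain t where "j = P ^ i * t" by (auto elim: dvdE)
    hence "f k = zmul t (zmul (P ^ i) (s i))" using fk by (simp add: zmul_mult mult.commute)
    also have "zmul (P ^ i) (s i) = k" using spow[of 0 i] s0 by simp
    finally show "\<exists>t. f k = zmul t k" by blast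
  qed
qed

lemma caseI_good:
  fixes c y k :: "'a::ab_group_add"
  assumes CE: "End_centrally_essential TYPE('a)" and P: "prime (P::int)"
    and c0: "c \<noteq> 0" and Pc: "zmul P c = 0" and hy: "zmul (P ^ h) y = c"
    and nh: "\<not> (\<exists>z. zmul (P ^ Suc h) z = c)"
    and km: "zmul (P ^ m) k = 0"
  shows "Good k"
proof -
  define Pn where "Pn = P ^ Suc h"
  have yn: "zmul Pn y = 0" unfolding Pn_def using hy Pc by (simp add: zmul_mult)
  have ordy: "zmul j y = 0 \<longleftrightarrow> Pn dvd j" for j
    unfolding Pn_def using exact_order[OF P _ yn[unfolded Pn_def], of j] hy c0 by simp
  have P0: "P \<noteq> 0" using P by auto
  define C where "C = {zmul j y | j. True}"
  have Csg: "is_subgroup C" unfolding C_def is_subgroup_def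
  proof (intro conjI ballI)
    have "(0::'a) = zmul 0 y" by simp
    thus "0 \<in> {zmul j y | j. True}" by blast
  next
    fix a b assume "a \<in> {zmul j y | j. True}" "b \<in> {zmul j y | j. True}"
    then obtain j j' where "a = zmul j y" "b = zmul j' y" by blast
    hence "a + b = zmul (j + j') y" by (simp add: zmul_add)
    thus "a + b \<in> {zmul j y | j. True}" by blast
  next
    fix a assume "a \<in> {zmul j y | j. True}"
    then obtain j where "a = zmul j y" by blast
    hence "- a = zmul (- j) y" by (simp add: zmul_uminus)
    thus "- a \<in> {zmul j y | j. True}" by blast
  qed
  have inter: "zmul j y = 0" if ja: "zmul j y = zmul Pn a" for j a
  proof (cases "Pn dvd j")
    case True thus ?thesis using ordy by simp
  next
    case False
    then obtain a' u where a': "a' < Suc h" "j = P ^ a' * u" "\<not> P dvd u"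
      using pdecomp[OF P, of "Suc h" j] unfolding Pn_def by blast
    have "P ^ (h - a') * j = u * P ^ h" using a'
      by (simp add: mult.assoc[symmetric] power_add[symmetric] mult.commute)
    hence "zmul (P ^ (h - a')) (zmul j y) = zmul (u * P ^ h) y" by (simp add: zmul_mult[symmetric])
    also have "\<dots> = zmul u c" using hy by (simp add: zmul_mult)
    finally have "zmul u c = zmul (P ^ (h - a')) (zmul j y)" by simp
    also have "\<dots> = zmul Pn (zmul (P ^ (h - a')) a)" using ja by (simp add: zmul_comm)
    finally have uc: "zmul u c = zmul Pn (zmul (P ^ (h - a')) a)" .
    have "coprime u P" using prime_imp_coprime[OF P a'(3)] by (simp add: ac_simps)
    then obtain u' v' where uv: "u' * u + v' * P = 1" using bezout_coprime by blast
    have "c = zmul (u' * u + v' * P) c" using uv by simp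
    also have "\<dots> = zmul u' (zmul u c)" unfolding zmul_comb using Pc by simp
    also have "\<dots> = zmul Pn (zmul u' (zmul (P ^ (h - a')) a))" using uc by (simp add: zmul_comm)
    finally have "\<exists>z. zmul (P ^ Suc h) z = c" unfolding Pn_def by (intro exI) (rule sym)
    with nh show ?thesis by blast
  qed
  define S where "S = {zmul j y + zmul Pn a | j a. True}"
  have Ssg: "is_subgroup S" unfolding S_def is_subgroup_def
  proof (intro conjI ballI)
    have "(0::'a) = zmul 0 y + zmul Pn 0" by simp
    thus "0 \<in> {zmul j y + zmul Pn a | j a. True}" by blast
  next
    fix x x' assume "x \<in> {zmul j y + zmul Pn a | j a. True}" "x' \<in> {zmul j y + zmul Pn a | j a. True}"
    then obtain j a j' a' where "x = zmul j y + zmul Pn a" "x' = zmul j' y + zmul Pn a'" by blast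
    hence "x + x' = zmul (j + j') y + zmul Pn (a + a')" by (simp add: zmul_add zmul_plus algebra_simps)
    thus "x + x' \<in> {zmul j y + zmul Pn a | j a. True}" by blast
  next
    fix x assume "x \<in> {zmul j y + zmul Pn a | j a. True}"
    then obtain j a where "x = zmul j y + zmul Pn a" by blast
    hence "- x = zmul (- j) y + zmul Pn (- a)" by (simp add: zmul_uminus zmul_neg)
    thus "- x \<in> {zmul j y + zmul Pn a | j a. True}" by blast
  qed
  define h0 where "h0 = (\<lambda>x. SOME w. w \<in> C \<and> (\<exists>a. x = w + zmul Pn a))"
  have h0_eq: "h0 (zmul j y + zmul Pn a) = zmul j y" for j a
  proof -
    have ex: "\<exists>w. w \<in> C \<and> (\<exists>a'. zmul j y + zmul Pn a = w + zmul Pn a')" unfolding C_def by blast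
    obtain w a' where w: "w \<in> C" "zmul j y + zmul Pn a = w + zmul Pn a'" "h0 (zmul j y + zmul Pn a) = w"
      using someI_ex[OF ex] unfolding h0_def by blast
    obtain j' where j': "w = zmul j' y" using w(1) unfolding C_def by blast
    have "zmul (j - j') y = zmul Pn (a' - a)" using w(2) j'
      by (simp add: zmul_diff zmul_minus algebra_simps)
    hence "zmul (j - j') y = 0" by (rule inter)
    hence "zmul j y = w" using j' by (simp add: zmul_diff)
    thus ?thesis using w(3) by simp
  qed
  have hC: "\<forall>x\<in>S. h0 x \<in> C"
  proof
    fix x assume "x \<in> S"
    then obtain j a where "x = zmul j y + zmul Pn a" unfolding S_def by blast
    thus "h0 x \<in> C" using h0_eq unfolding C_def by auto
  qed
  have hadd: "\<forall>x\<in>S. \<forall>x'\<in>S. h0 (x + x') = h0 x + h0 x'"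
  proof (intro ballI)
    fix x x' assume "x \<in> S" "x' \<in> S"
    then obtain j a j' a' where xx: "x = zmul j y + zmul Pn a" "x' = zmul j' y + zmul Pn a'" unfolding S_def by blast
    hence "x + x' = zmul (j + j') y + zmul Pn (a + a')" by (simp add: zmul_add zmul_plus algebra_simps)
    hence "h0 (x + x') = zmul (j + j') y" using h0_eq by simp
    moreover have "h0 x = zmul j y" "h0 x' = zmul j' y" using xx h0_eq by simp_all
    ultimately show "h0 (x + x') = h0 x + h0 x'" by (simp add: zmul_add)
  qed
  have step: "\<exists>c\<in>C. zmul mm c = \<phi> (zmul mm x)"
    if H: "is_subgroup H" "S \<subseteq> H" "\<forall>z\<in>H. \<phi> z \<in> C" "\<forall>u\<in>H. \<forall>v\<in>H. \<phi> (u+v) = \<phi> u + \<phi> v"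
      "\<forall>z\<in>S. \<phi> z = h0 z" "mm > 0" "zmul mm x \<in> H" for H \<phi> x mm
  proof -
    have phiPn: "\<phi> (zmul Pn a) = 0" for a
    proof -
      have "zmul Pn a = zmul 0 y + zmul Pn a" by simp
      hence "zmul Pn a \<in> S" unfolding S_def by blast
      hence "\<phi> (zmul Pn a) = h0 (zmul Pn a)" using H(5) by blast
      also have "zmul Pn a = zmul 0 y + zmul Pn a" by simp
      finally show ?thesis using h0_eq[of 0 a] by simp
    qed
    obtain i where vi: "\<phi> (zmul mm x) = zmul i y" using H(3,7) unfolding C_def by blast
    show ?thesis
    proof (cases "Pn dvd mm")
      case True
      then obtain t where "mm = Pn * t" by (auto elim: dvdE)
      hence "\<phi> (zmul mm x) = 0" using phiPn by (simp add: zmul_mult)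
      moreover have "(0::'a) \<in> C" using Csg by (rule sg_0)
      ultimately show ?thesis by (intro bexI[of _ 0]) simp_all
    next
      case False
      then obtain a' u where a': "a' < Suc h" "mm = P ^ a' * u" "\<not> P dvd u"
        using pdecomp[OF P, of "Suc h" mm] unfolding Pn_def by blast
      have "P ^ (Suc h - a') * mm = Pn * u" unfolding Pn_def using a'
        by (simp add: mult.assoc[symmetric] power_add[symmetric])
      hence eqz: "zmul (P ^ (Suc h - a')) (zmul mm x) = zmul Pn (zmul u x)" by (simp add: zmul_mult[symmetric])
      have "zmul (P ^ (Suc h - a')) (zmul i y) = zmul (P ^ (Suc h - a')) (\<phi> (zmul mm x))" using vi by simp
      also have "\<dots> = \<phi> (zmul (P ^ (Suc h - a')) (zmul mm x))" using phom_zmul[OF H(1) H(4) H(7)] by simp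
      also have "\<dots> = 0" unfolding eqz by (rule phiPn)
      finally have "zmul (P ^ (Suc h - a') * i) y = 0" by (simp add: zmul_mult)
      hence "Pn dvd P ^ (Suc h - a') * i" using ordy by simp
      hence "P ^ (Suc h - a') * P ^ a' dvd P ^ (Suc h - a') * i" unfolding Pn_def using a'
        by (simp add: power_add[symmetric])
      hence "P ^ a' dvd i" using P0 by simp
      then obtain i' where i': "i = P ^ a' * i'" by (auto elim: dvdE)
      have "coprime u Pn" unfolding Pn_def using prime_imp_coprime[OF P a'(3)] by (simp add: ac_simps)
      then obtain u'' v'' where uv: "u'' * u + v'' * Pn = 1" using bezout_coprime by blast
      have "zmul mm (zmul (u'' * i') y) = zmul (P ^ a' * i') (zmul (u'' * u) y)"
        using a' by (simp add: zmul_mult[symmetric] ac_simps)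
      also have "zmul (u'' * u) y = y" 
      proof -
        have "y = zmul (u'' * u + v'' * Pn) y" using uv by simp
        also have "\<dots> = zmul (u'' * u) y" using yn by (simp add: zmul_add zmul_mult)
        finally show ?thesis by simp
      qed
      finally have "zmul mm (zmul (u'' * i') y) = \<phi> (zmul mm x)" using vi i' by (simp add: zmul_mult)
      moreover have "zmul (u'' * i') y \<in> C" unfolding C_def by blast
      ultimately show ?thesis by blast
    qed
  qed
  obtain \<pi> where \<pi>E: "\<pi> \<in> End" and \<pi>C: "\<forall>x. \<pi> x \<in> C" and \<pi>S: "\<forall>x\<in>S. \<pi> x = h0 x"
  proof -
    have "\<exists>F\<in>End. (\<forall>x. F x \<in> C) \<and> (\<forall>x\<in>S. F x = h0 x)"
      by (rule extend_hom[OF Ssg Csg hC hadd], rule step)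
    thus ?thesis using that by blast
  qed
  have \<pi>y: "\<pi> (zmul j y) = zmul j y" for j
  proof -
    have "zmul j y = zmul j y + zmul Pn 0" by simp
    hence "zmul j y \<in> S" unfolding S_def by blast
    hence "\<pi> (zmul j y) = h0 (zmul j y)" using \<pi>S by blast
    also have "zmul j y = zmul j y + zmul Pn 0" by simp
    finally show ?thesis using h0_eq[of j 0] by simp
  qed
  have J: "\<pi> x = zmul (SOME j. \<pi> x = zmul j y) y" for x
  proof -
    have "\<exists>j. \<pi> x = zmul j y" using \<pi>C unfolding C_def by blast
    thus ?thesis by (rule someI_ex)
  qed
  have inC: "\<exists>j. \<pi> x = zmul j y" for x using \<pi>C unfolding C_def by blast
  have idem: "\<pi> (\<pi> x) = \<pi> x" for x
  proof -
    obtain j where "\<pi> x = zmul j y" using inC by blast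
    thus ?thesis using \<pi>y[of j] by simp
  qed
  have central: "\<pi> (f x) = f (\<pi> x)" if "f \<in> End" for f x by (rule idem_central[OF CE \<pi>E idem that])
  have allin: "\<exists>j. k = zmul j y"
  proof -
    define k' where "k' = k - \<pi> k"
    have \<pi>k': "\<pi> k' = 0" unfolding k'_def using \<pi>E idem by (simp add: End_diff)
    have mk': "zmul (P ^ m) k' = 0" unfolding k'_def using km \<pi>E
      by (simp add: zmul_minus End_zmul[symmetric] End_0)
    have "k' = 0"
    proof (rule ccontr)
      assume "k' \<noteq> 0"
      then obtain N where N1: "N \<ge> 1" and NK: "zmul (P ^ N) k' = 0" and NK1: "zmul (P ^ (N - 1)) k' \<noteq> 0"
        using exists_exact[OF _ mk'] by blast
      define b where "b = zmul (P ^ (N - 1)) k'"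
      have b0: "b \<noteq> 0" using NK1 unfolding b_def .
      have Pb: "zmul P b = 0"
      proof -
        have "P * P ^ (N - 1) = P ^ N" using N1 by (cases N) auto
        thus ?thesis using NK by (simp add: b_def zmul_mult[symmetric])
      qed
      have \<pi>b: "\<pi> b = 0" unfolding b_def using \<pi>E \<pi>k' by (simp add: End_zmul)
      define Jf where "Jf = (\<lambda>x. SOME j. \<pi> x = zmul j y)"
      have Jx: "\<pi> x = zmul (Jf x) y" for x unfolding Jf_def by (rule J)
      have keyb: "zmul j b = zmul j' b" if "zmul j y = zmul j' y" for j j'
      proof -
        have "zmul (j - j') y = 0" using that by (simp add: zmul_diff)
        hence "Pn dvd (j - j')" using ordy by simp
        moreover have "P dvd Pn" unfolding Pn_def by simp
        ultimately have "P dvd (j - j')" by (rule dvd_trans[rotated])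
        then obtain t where "j - j' = P * t" by (auto elim: dvdE)
        hence "zmul (j - j') b = 0" using Pb by (simp add: zmul_mult zmul_comm[of P])
        thus ?thesis by (simp add: zmul_diff)
      qed
      define \<psi> where "\<psi> = (\<lambda>x. zmul (Jf x) b)"
      have \<psi>E: "\<psi> \<in> End" unfolding End_def
      proof (intro CollectI allI)
        fix x x'
        have "zmul (Jf (x + x')) y = zmul (Jf x + Jf x') y"
          using Jx[of "x+x'"] Jx[of x] Jx[of x'] \<pi>E by (simp add: End_add zmul_add)
        hence "zmul (Jf (x + x')) b = zmul (Jf x + Jf x') b" by (rule keyb)
        thus "\<psi> (x + x') = \<psi> x + \<psi> x'" unfolding \<psi>_def by (simp add: zmul_add)
      qed
      have "zmul (Jf y) y = zmul 1 y" using Jx[of y] \<pi>y[of 1] by simp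
      hence "zmul (Jf y) b = zmul 1 b" by (rule keyb)
      hence \<psi>y: "\<psi> y = b" unfolding \<psi>_def by simp
      have "\<pi> (\<psi> y) = \<psi> (\<pi> y)" by (rule central[OF \<psi>E])
      also have "\<pi> y = y" using \<pi>y[of 1] by simp
      finally have "\<pi> b = b" using \<psi>y by simp
      thus False using \<pi>b b0 by simp
    qed
    hence "k = \<pi> k" unfolding k'_def by simp
    moreover obtain j where "\<pi> k = zmul j y" using inC by blast
    ultimately show ?thesis by auto
  qed
  have Gy: "Good y"
  proof (rule good_of_mult)
    fix f :: "'a \<Rightarrow> 'a" assume f: "f \<in> End"
    have "f y = f (\<pi> y)" using \<pi>y[of 1] by simp
    also have "\<dots> = \<pi> (f y)" using central[OF f] by simp
    moreover obtain j where "\<pi> (f y) = zmul j y" using inC by blast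
    ultimately show "\<exists>t. f y = zmul t y" by auto
  qed
  from allin obtain j where "k = zmul j y" by blast
  thus ?thesis using Good_zmul[OF Gy] by simp
qed

lemma ppow_good:
  fixes k :: "'a::ab_group_add"
  assumes CE: "End_centrally_essential TYPE('a)" and P: "prime (P::int)"
    and km: "zmul (P ^ m) k = 0"
  shows "Good k"
proof (cases "\<exists>(c::'a) h y. c \<noteq> 0 \<and> zmul P c = 0 \<and> zmul (P ^ h) y = c \<and> \<not> (\<exists>z. zmul (P ^ Suc h) z = c)")
  case True
  then obtain c h y where "c \<noteq> 0" "zmul P c = 0" "zmul (P ^ h) y = (c::'a)" "\<not> (\<exists>z. zmul (P ^ Suc h) z = c)"
    by blast
  from caseI_good[OF CE P this km] show ?thesis .
next
  case False
  have H2: "\<forall>h. \<exists>z. zmul (P ^ h) z = c" if Pc: "zmul P c = 0" for c :: 'a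
  proof (cases "c = 0")
    case True thus ?thesis by (intro allI exI[of _ 0]) simp
  next
    case c0: False
    show ?thesis
    proof
      fix h show "\<exists>z. zmul (P ^ h) z = c"
      proof (induction h)
        case 0 show ?case by (intro exI[of _ c]) simp
      next
        case (Suc h)
        then obtain y where "zmul (P ^ h) y = c" by blast
        thus ?case using False c0 Pc by blast
      qed
    qed
  qed
  show ?thesis by (rule caseII_good[OF CE P _ km]) (rule H2)
qed

lemma torsion_good:
  fixes k :: "'a::ab_group_add"
  assumes CE: "End_centrally_essential TYPE('a)"
  shows "n > 0 \<Longrightarrow> zmul (int n) k = 0 \<Longrightarrow> Good k"
proof (induction n arbitrary: k rule: less_induct)
  case (less n)
  show ?case
  proof (cases "n = 1")
    case True
    hence "k = 0" using less.prems by simp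
    thus ?thesis by (simp add: Good_0)
  next
    case False
    then obtain p where p: "prime p" "p dvd n" using prime_factor_nat by blast
    obtain r where r: "n = p ^ multiplicity p n * r" "\<not> p dvd r"
    proof (rule multiplicity_decompose')
      show "n \<noteq> 0" using less.prems by simp
      show "\<not> is_unit p" using p(1) not_prime_unit by blast
    qed
    define a where "a = multiplicity p n"
    have nr: "n = p ^ a * r" using r unfolding a_def by simp
    have a0: "a \<noteq> 0" using nr p(2) r(2) by (cases a) auto
    have Pp: "prime (int p)" using p by simp
    have ka: "zmul (int p ^ a * int r) k = 0" using less.prems nr by simp
    show ?thesis
    proof (cases "r = 1")
      case True
      hence "zmul (int p ^ a) k = 0" using ka by simp
      thus ?thesis by (rule ppow_good[OF CE Pp])
    next
      case r1: False
      have "r > 0" using nr less.prems by (cases r) auto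
      have "p ^ a > 1" using a0 prime_gt_1_nat[OF p(1)] by (intro one_less_power) auto
      hence "1 * r < p ^ a * r" using \<open>r > 0\<close> by (simp only: mult_less_cancel2)
      hence "r < n" using nr by simp
      have "\<not> int p dvd int r" using r(2) by simp
      hence "coprime (int p) (int r)" by (rule prime_imp_coprime[OF Pp])
      hence "coprime (int p ^ a) (int r)" by simp
      then obtain u v where uv: "u * int p ^ a + v * int r = 1" using bezout_coprime by blast
      define k1 where "k1 = zmul (int p ^ a) k"
      define k2 where "k2 = zmul (int r) k"
      have "zmul (int r) k1 = 0" unfolding k1_def using ka by (simp add: zmul_mult[symmetric] mult.commute)
      hence G1: "Good k1" using less.IH[OF \<open>r < n\<close> \<open>r > 0\<close>] by blast
      have "zmul (int p ^ a) k2 = 0" unfolding k2_def using ka by (simp add: zmul_mult[symmetric])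
      hence G2: "Good k2" by (rule ppow_good[OF CE Pp])
      have "k = zmul (u * int p ^ a + v * int r) k" using uv by simp
      also have "\<dots> = zmul u k1 + zmul v k2" unfolding zmul_comb k1_def k2_def ..
      finally show ?thesis using G1 G2 by (simp add: Good_add Good_zmul)
    qed
  qed
qed

lemma not_torsion:
  assumes "\<not> (\<exists>n>0. zmul (int n) z = 0)" and "zmul j z = 0"
  shows "j = 0"
proof (rule ccontr)
  assume j0: "j \<noteq> 0"
  show False
  proof (cases "j > 0")
    case True
    hence "zmul (int (nat j)) z = 0" "nat j > 0" using assms(2) by simp_all
    thus False using assms(1) by blast
  next
    case False
    hence "int (nat (- j)) = - j" "nat (- j) > 0" using j0 by simp_all
    moreover have "zmul (- j) z = 0" using assms(2) by (simp add: zmul_uminus)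
    ultimately show False using assms(1) by metis
  qed
qed

theorem corollary2p5:
  assumes "non_reduced TYPE('a::ab_group_add)"
  shows "End_centrally_essential TYPE('a) \<longleftrightarrow> End_commutative TYPE('a)"
proof -
  obtain D :: "'a set" where D: "divisible_subgroup D" and DN: "D \<noteq> {0}"
    using assms unfolding non_reduced_def by blast
  have Dsg: "is_subgroup D" using D unfolding divisible_subgroup_def by blast
  obtain d0 where d0D: "d0 \<in> D" and d00: "d0 \<noteq> 0" using DN Dsg sg_0 by blast
  show ?thesis
  proof
    assume CE: "End_centrally_essential TYPE('a)"
    obtain e where eE: "e \<in> End" and eD: "\<forall>x. e x \<in> D" and eid: "\<forall>x\<in>D. e x = x"
      using proj_div[OF D] by blast
    have eidem: "e (e z) = e z" for z using eD eid by blast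
    have goodD: "Good z" if zD: "z \<in> D" for z
    proof (cases "\<exists>n>0. zmul (int n) z = 0")
      case True
      then obtain n where "n > 0" "zmul (int n) z = 0" by blast
      thus ?thesis by (rule torsion_good[OF CE])
    next
      case False
      show ?thesis by (rule good_inf[OF CE D zD]) (rule not_torsion[OF False])
    qed
    have allgood: "Good x" for x :: 'a
    proof -
      define k where "k = x - e x"
      have ek: "e k = 0" unfolding k_def using eE eidem by (simp add: End_diff)
      have "\<exists>n>0. zmul (int n) k = 0"
      proof (rule ccontr)
        assume nt: "\<not> (\<exists>n>0. zmul (int n) k = 0)"
        define S where "S = {zmul j k | j. True}"
        have Ssg: "is_subgroup S" unfolding S_def is_subgroup_def
        proof (intro conjI ballI)
          have "(0::'a) = zmul 0 k" by simp
          thus "0 \<in> {zmul j k | j. True}" by blast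
        next
          fix a b assume "a \<in> {zmul j k | j. True}" "b \<in> {zmul j k | j. True}"
          then obtain j j' where "a = zmul j k" "b = zmul j' k" by blast
          hence "a + b = zmul (j + j') k" by (simp add: zmul_add)
          thus "a + b \<in> {zmul j k | j. True}" by blast
        next
          fix a assume "a \<in> {zmul j k | j. True}"
          then obtain j where "a = zmul j k" by blast
          hence "- a = zmul (- j) k" by (simp add: zmul_uminus)
          thus "- a \<in> {zmul j k | j. True}" by blast
        qed
        define hs where "hs = (\<lambda>z. zmul (SOME j. z = zmul j k) d0)"
        have hk: "hs (zmul j k) = zmul j d0" for j
        proof -
          have ex: "\<exists>j'. zmul j k = zmul j' k" by blast
          have "zmul j k = zmul (SOME j'. zmul j k = zmul j' k) k" using someI_ex[OF ex] .
          hence "zmul (j - (SOME j'. zmul j k = zmul j' k)) k = 0" by (simp add: zmul_diff)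
          hence "j - (SOME j'. zmul j k = zmul j' k) = 0" by (rule not_torsion[OF nt])
          thus ?thesis unfolding hs_def by simp
        qed
        have hE: "\<forall>z\<in>S. hs z \<in> D"
        proof
          fix z assume "z \<in> S"
          then obtain j where "z = zmul j k" unfolding S_def by blast
          thus "hs z \<in> D" using hk d0D Dsg by (simp add: sg_zmul)
        qed
        have hadd: "\<forall>z\<in>S. \<forall>z'\<in>S. hs (z + z') = hs z + hs z'"
        proof (intro ballI)
          fix z z' assume "z \<in> S" "z' \<in> S"
          then obtain j j' where jj: "z = zmul j k" "z' = zmul j' k" unfolding S_def by blast
          hence "hs (z + z') = zmul (j + j') d0" using hk by (simp add: zmul_add[symmetric])
          thus "hs (z + z') = hs z + hs z'" using jj hk by (simp add: zmul_add)
        qed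
        obtain \<phi> where \<phi>E: "\<phi> \<in> End" and \<phi>D: "\<forall>z. \<phi> z \<in> D" and \<phi>S: "\<forall>z\<in>S. \<phi> z = hs z"
          using ext_div[OF D Ssg hE hadd] by blast
        have "k = zmul 1 k" by simp
        hence "k \<in> S" unfolding S_def by blast
        hence "\<phi> k = hs (zmul 1 k)" using \<phi>S by simp
        hence \<phi>k: "\<phi> k = d0" using hk[of 1] by simp
        define \<psi> where "\<psi> = (\<lambda>z. \<phi> (z - e z))"
        have \<psi>E: "\<psi> \<in> End" unfolding End_def
        proof (intro CollectI allI)
          fix u v :: 'a
          have "u + v - e (u + v) = (u - e u) + (v - e v)" using eE by (simp add: End_add)
          hence "\<phi> (u + v - e (u + v)) = \<phi> (u - e u) + \<phi> (v - e v)" using End_add[OF \<phi>E] by metis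
          thus "\<psi> (u + v) = \<psi> u + \<psi> v" unfolding \<psi>_def .
        qed
        have "e (\<psi> k) = \<psi> (e k)" by (rule idem_central[OF CE eE eidem \<psi>E])
        moreover have "e (\<psi> k) = \<psi> k" unfolding \<psi>_def using \<phi>D eid by blast
        moreover have "\<psi> (e k) = 0" unfolding \<psi>_def ek using \<phi>E eE by (simp add: End_0)
        moreover have "\<psi> k = d0" unfolding \<psi>_def ek using \<phi>k by simp
        ultimately show False using d00 by simp
      qed
      then obtain n where "n > 0" "zmul (int n) k = 0" by blast
      hence Gk: "Good k" by (rule torsion_good[OF CE])
      have "Good (e x)" using goodD eD by blast
      hence "Good (e x + k)" using Gk by (rule Good_add)
      thus ?thesis unfolding k_def by simp
    qed
    show "End_commutative TYPE('a)" unfolding End_commutative_def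
    proof (intro ballI)
      fix f g :: "'a \<Rightarrow> 'a" assume "f \<in> End" "g \<in> End"
      thus "f \<circ> g = g \<circ> f" using allgood unfolding Good_def by (intro ext) simp
    qed
  next
    assume comm: "End_commutative TYPE('a)"
    show "End_centrally_essential TYPE('a)" unfolding End_centrally_essential_def
    proof (intro ballI impI)
      fix a :: "'a \<Rightarrow> 'a" assume aE: "a \<in> End" and a0: "a \<noteq> (\<lambda>_. 0)"
      have idc: "(\<lambda>x. x) \<in> End_center" unfolding End_center_def using End_id by (auto simp: comp_def)
      have ac: "a \<in> End_center" unfolding End_center_def using aE comm unfolding End_commutative_def by blast
      have "(\<lambda>x::'a. x) \<noteq> (\<lambda>_. 0)" using d00 by metis
      moreover have "a \<circ> (\<lambda>x. x) = a" by (simp add: comp_def)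
      ultimately show "\<exists>x\<in>End_center. \<exists>y\<in>End_center. x \<noteq> (\<lambda>_. 0) \<and> y \<noteq> (\<lambda>_. 0) \<and> a \<circ> x = y"
        using idc ac a0 by blast
    qed
  qed
qed

end
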